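(* Let $\theta>1$, $r\in(\theta^{-1},\theta^{-1/2}]$ and $\rho\in(0,1]$, and set $s_\rho:=\max\big(1,\frac1\rho\big(\frac{\ln\theta}{\ln(r\theta)}-2\big)\big)$. Then for every $n\ge1$, every price sequence $p\in[1,\theta]^n$ with maximum $p^*$ and every prediction $y\in[1,\theta]$, \[ \frac{\mathsf{A}^\rho_r(p,y)}{p^*}\ \ge\ \max\Big(r,\ \frac{1}{r\theta}\,\mathcal{E}(p^*,y)^{s_\rho}\Big). \]
   Context: One-max search: fix $\theta>1$. An instance is a sequence of prices $p=(p_1,\dots,p_n)\in[1,\theta]^n$, revealed one at a time; the algorithm receives at the start a prediction $y\in[1,\theta]$ of $p^*:=\max_ip_i$. At each step the algorithm irrevocably accepts the current price (payoff = that price) or rejects it; if nothing is accepted by step $n$ the payoff is $1$. For $\Phi:[1,\theta]\to[1,\theta]$, the threshold algorithm $\mathsf{A}_\Phi$ accepts the first $p_i$ with $p_i\ge\Phi(y)$. Define $\varphi_r(z)=\frac{r\theta-1}{1-r}+\frac{1-r^2\theta}{1-r}\cdot\frac{z}{r\theta}$ (the line through $(r\theta,r\theta)$ and $(\theta,1/r)$), and for $\rho\in(0,1]$ the threshold \[ \Phi^\rho_r(y)=\begin{cases} r\theta & y\in[1,r\theta)\\ \varphi_r(y) & y\in[r\theta,\tfrac1r)\\ \varphi_r(\tfrac1r)+\big(\tfrac1r-\varphi_r(\tfrac1r)\big)\dfrac{y-\tfrac1r}{\rho(\theta-\tfrac1r)} & y\in[\tfrac1r,\tfrac1r+\rho(\theta-\tfrac1r))\\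 \tfrac1r & y\in[\tfrac1r+\rho(\theta-\tfrac1r),\theta].\end{cases} \] $\mathsf{A}^\rho_r:=\mathsf{A}_{\Phi^\rho_r}$. The multiplicative error is $\mathcal{E}(p^*,y)=\min\{p^*/y,\,y/p^*\}\in[\theta^{-1},1]$. *)

theory Defs
  imports Complex_Main
begin

definition threshold_payoff :: "(real \<Rightarrow> real) \<Rightarrow> real list \<Rightarrow> real \<Rightarrow> real" where
  "threshold_payoff Phi p y =
     (case find (\<lambda>x. x \<ge> Phi y) p of None \<Rightarrow> 1 | Some x \<Rightarrow> x)"

text \<open>The line through (r theta, r theta) and (theta, 1/r).\<close>
definition phi_line :: "real \<Rightarrow> real \<Rightarrow> real \<Rightarrow> real" where
  "phi_line theta r z = (r*theta - 1)/(1 - r) + (1 - r^2*theta)/(1 - r) * (z/(r*theta))"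

definition Phi_rho :: "real \<Rightarrow> real \<Rightarrow> real \<Rightarrow> real \<Rightarrow> real" where
  "Phi_rho theta r rho y =
     (if y < r*theta then r*theta
      else if y < 1/r then phi_line theta r y
      else if y < 1/r + rho*(theta - 1/r) then
        phi_line theta r (1/r) + (1/r - phi_line theta r (1/r)) * ((y - 1/r) / (rho*(theta - 1/r)))
      else 1/r)"

definition A_rho :: "real \<Rightarrow> real \<Rightarrow> real \<Rightarrow> real list \<Rightarrow> real \<Rightarrow> real" where
  "A_rho theta r rho p y = threshold_payoff (Phi_rho theta r rho) p y"

definition mult_err :: "real \<Rightarrow> real \<Rightarrow> real" where
  "mult_err pstar y = min (pstar / y) (y / pstar)"

end

theory Submission
  imports Defs "HOL-Analysis.Analysis"
begin

lemma C_iff: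
  fixes x y s l :: real
  assumes "0<x" "0<y" "s>0"
  shows "((s+1)*ln x \<le> l + s*ln y) \<longleftrightarrow> x powr ((s+1)/s) \<le> exp(l/s)*y"
proof -
  have "x powr ((s+1)/s) = exp (((s+1)/s) * ln x)" using assms by (simp add: powr_def)
  moreover have "exp(l/s)*y = exp (l/s + ln y)" using assms by (simp add: exp_add)
  moreover have "((s+1)/s) * ln x = ((s+1)*ln x)/s" by simp
  moreover have "l/s + ln y = (l + s*ln y)/s" using assms by (simp add: field_simps)
  moreover have "(((s+1)*ln x)/s \<le> (l + s*ln y)/s) \<longleftrightarrow> ((s+1)*ln x \<le> l + s*ln y)"
    using assms by (simp add: divide_le_cancel)
  ultimately show ?thesis by simp
qed

lemma seg:
  fixes a b y fa fb s l :: real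
  assumes "a < b" "a \<le> y" "y \<le> b" "0 < a" "0 < fa" "0 < fb" "s > 0"
    and ca: "(s+1)*ln fa \<le> l + s*ln a" and cb: "(s+1)*ln fb \<le> l + s*ln b"
  shows "(s+1)*ln (fa + (fb-fa)*((y-a)/(b-a))) \<le> l + s*ln y"
proof -
  define t where "t = (y-a)/(b-a)"
  have t0: "0 \<le> t" and t1: "t \<le> 1" using assms by (auto simp: t_def field_simps)
  have "t*(b-a) = y-a" using assms unfolding t_def by simp
  hence yeq: "y = (1-t)*a + t*b" by (simp add: algebra_simps)
  define v where "v = fa + (fb-fa)*t"
  have veq: "v = (1-t)*fa + t*fb" unfolding v_def by (simp add: algebra_simps)
  have vpos: "0 < v" unfolding veq using t0 t1 assms
    by (smt (verit) mult_nonneg_nonneg mult_pos_pos)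
  define p where "p = (s+1)/s"
  have p1: "p \<ge> 1" using assms by (simp add: p_def field_simps)
  have cv: "convex_on {0<..} (\<lambda>x::real. x powr p)" by (rule powr_convex[OF p1])
  have "v powr p \<le> (1-t) * fa powr p + t * fb powr p"
    using convex_onD[OF cv, of t fa fb] t0 t1 assms by (simp add: veq)
  also have "\<dots> \<le> (1-t) * (exp(l/s)*a) + t*(exp(l/s)*b)"
  proof -
    have "fa powr p \<le> exp(l/s)*a" using C_iff[of fa a s l] assms ca p_def by simp
    moreover have "fb powr p \<le> exp(l/s)*b" using C_iff[of fb b s l] assms cb p_def by simp
    ultimately show ?thesis using t0 t1 by (intro add_mono mult_left_mono) auto
  qed
  also have "\<dots> = exp(l/s)*y" unfolding yeq by (simp add: algebra_simps)
  finally have "v powr p \<le> exp(l/s)*y" .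
  then show ?thesis using C_iff[of v y s l] vpos assms p_def unfolding v_def t_def by simp
qed


lemma phi_alt:
  fixes theta r z :: real
  assumes "0 < r" "r < 1" "theta > 1"
  shows "phi_line theta r z = r*theta + (1/r - r*theta)*((z - r*theta)/(theta - r*theta))"
proof -
  have n: "1 - r \<noteq> 0" "r \<noteq> 0" "theta \<noteq> 0" using assms by auto
  have h1: "1/r - r*theta = (1 - r^2*theta)/r" using n by (simp add: field_simps power2_eq_square)
  have h2: "theta - r*theta = theta*(1-r)" by (simp add: algebra_simps)
  have "r*theta + (1/r - r*theta)*((z - r*theta)/(theta - r*theta))
      = r*theta + (1 - r^2*theta)*(z - r*theta)/(r*theta*(1-r))" unfolding h1 h2 by simp
  also have "\<dots> = r*theta + (1 - r^2*theta)/(1-r)*(z/(r*theta)) - (1 - r^2*theta)/(1-r)"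
  proof -
    have "(z - r*theta)/(r*theta) = z/(r*theta) - 1" using n by (simp add: diff_divide_distrib)
    moreover have "(1 - r^2*theta)*(z - r*theta)/(r*theta*(1-r)) = ((1 - r^2*theta)/(1-r)) * ((z - r*theta)/(r*theta))"
      by (simp add: mult.commute)
    ultimately show ?thesis by (simp add: right_diff_distrib)
  qed
  also have "r*theta - (1 - r^2*theta)/(1-r) = (r*theta - 1)/(1-r)"
    using n by (simp add: field_simps power2_eq_square) 
  hence "r*theta + (1 - r^2*theta)/(1-r)*(z/(r*theta)) - (1 - r^2*theta)/(1-r) = phi_line theta r z"
    unfolding phi_line_def by simp
  finally show ?thesis by simp
qed

context
  fixes theta r rho s :: real
  assumes th: "theta > 1" and rlo: "1/theta < r" and rhi: "r \<le> 1 / sqrt theta"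
    and rho0: "0 < rho" and rho1: "rho \<le> 1"
    and s1: "s \<ge> 1" and srho: "s*rho*ln (r*theta) \<ge> ln theta - 2*ln(r*theta)"
begin

lemma basics: "0 < r" "r < 1" "r*theta > 1" "r*r*theta \<le> 1" "1/r < theta" "r*theta \<le> 1/r"
  "ln (r*theta) > 0" "ln (1/r) = ln theta - ln (r*theta)"
  "s*ln (r*theta) \<ge> ln theta - 2*ln(r*theta)"
proof -
  show r0: "0 < r" using rlo th by (smt (verit) divide_pos_pos)
  show rt: "r*theta > 1" using rlo th by (simp add: field_simps)
  have sq: "sqrt theta > 0" using th by simp
  have "r * sqrt theta \<le> 1" using rhi sq by (simp add: field_simps)
  hence "(r * sqrt theta)^2 \<le> 1" using r0 sq unfolding power2_eq_square by (intro mult_le_one[of "r * sqrt theta"]) auto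
  hence "r^2 * theta \<le> 1" using th by (simp add: power_mult_distrib)
  thus rr: "r*r*theta \<le> 1" by (simp add: power2_eq_square)
  show "r < 1"
  proof (rule ccontr)
    assume "\<not> r < 1" hence "r*r \<ge> 1" by (metis mult_mono' not_less mult_1 zero_le_one)
    hence "r*r*theta > 1" using th by (smt (verit) mult_le_cancel_right1)
    thus False using rr by simp
  qed
  show "1/r < theta" using rt r0 by (simp add: field_simps)
  show "r*theta \<le> 1/r" using rr r0 by (simp add: field_simps)
  show l0: "ln (r*theta) > 0" using rt by simp
  show "ln (1/r) = ln theta - ln (r*theta)" using r0 th by (simp add: ln_mult ln_div)
  have "s*rho*ln (r*theta) \<le> s*ln(r*theta)" using rho1 s1 l0
    by (simp add: mult_right_le_one_le mult_left_le)
  then show "s*ln (r*theta) \<ge> ln theta - 2*ln(r*theta)" using srho by simp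
qed

abbreviation "C x y \<equiv> (s+1)*ln x \<le> ln (r*theta) + s*ln y"

lemma seg2: assumes "r*theta \<le> y" "y \<le> theta"
  shows "C (phi_line theta r y) y" "phi_line theta r y \<le> y"
    "r*theta \<le> phi_line theta r y" "phi_line theta r y \<le> 1/r"
proof -
  note b = basics
  have k0: "0 \<le> (1/r - r*theta)" using b by simp
  have k1: "(1/r - r*theta) \<le> (theta - r*theta)" using b by simp
  have d: "theta - r*theta > 0" using b by simp
  define t where "t = (y - r*theta)/(theta - r*theta)"
  have t0: "0 \<le> t" "t \<le> 1" using assms d by (auto simp: t_def field_simps)
  have ph: "phi_line theta r y = r*theta + (1/r - r*theta)*t"
    using phi_alt[of r theta y] b th t_def by simp
  have "C (r*theta) (r*theta)" by (simp add: algebra_simps)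
  moreover have "C (1/r) theta"
  proof -
    have "ln (1/r) = ln theta - ln (r*theta)" using b by simp
    moreover have "(s+1)*(ln theta - ln (r*theta)) \<le> ln (r*theta) + s*ln theta"
      using b(9) by (simp add: algebra_simps)
    ultimately show ?thesis by simp
  qed
  ultimately have "C (r*theta + (1/r - r*theta)*((y-r*theta)/(theta - r*theta))) y"
    using seg[of "r*theta" theta y "r*theta" "1/r" s "ln (r*theta)"] b assms s1 by simp
  thus "C (phi_line theta r y) y" using ph t_def by simp
  have "(1/r - r*theta)*t \<le> (theta - r*theta)*t" using k1 t0 by (simp add: mult_right_mono)
  also have "\<dots> = y - r*theta" using d unfolding t_def by (metis nonzero_mult_div_cancel_left less_irrefl times_divide_eq_right)
  finally show "phi_line theta r y \<le> y" using ph by simp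
  show "r*theta \<le> phi_line theta r y" using ph k0 t0 by simp
  have "(1/r - r*theta)*t \<le> (1/r - r*theta)" using k0 t0 by (simp add: mult_left_le)
  thus "phi_line theta r y \<le> 1/r" using ph by simp
qed

lemma seg2_lower: assumes "r*theta \<le> y" "y \<le> theta"
  shows "y/(r*theta) \<le> phi_line theta r y"
proof -
  note b = basics
  have d: "theta - r*theta > 0" using b by simp
  define t where "t = (y - r*theta)/(theta - r*theta)"
  have t0: "0 \<le> t" "t \<le> 1" using assms d by (auto simp: t_def field_simps)
  have ph: "phi_line theta r y = r*theta + (1/r - r*theta)*t"
    using phi_alt[of r theta y] b th t_def by simp
  have nz: "theta \<noteq> 0" "r \<noteq> 1" using b th by auto
  have yt: "y = r*theta + t*(theta - r*theta)" using d nz unfolding t_def by simp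
  have "y/(r*theta) = 1 + t*((theta - r*theta)/(r*theta))" unfolding yt using b
    by (simp add: add_divide_distrib)
  also have "(theta - r*theta)/(r*theta) = 1/r - 1" using b th by (simp add: field_simps)
  finally have e: "y/(r*theta) = 1 + t*(1/r - 1)" .
  have "phi_line theta r y - y/(r*theta) = (1-t)*(r*theta - 1)" unfolding ph e
    by (simp add: algebra_simps)
  moreover have "(1-t)*(r*theta - 1) \<ge> 0" using t0 b by simp
  ultimately show ?thesis by simp
qed

definition "yone = 1/r + rho*(theta - 1/r)"

lemma yone_props: "1/r < yone" "yone \<le> theta" "C (1/r) yone"
proof -
  note b = basics
  show "1/r < yone" unfolding yone_def using b rho0 by simp
  have "rho*(theta - 1/r) \<le> 1*(theta - 1/r)" using rho1 b by (intro mult_right_mono) auto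
  thus "yone \<le> theta" unfolding yone_def by simp
  have "ln ((1-rho) *\<^sub>R (1/r) + rho *\<^sub>R theta) \<ge> (1-rho)*ln (1/r) + rho*ln theta"
    using concave_onD[OF ln_concave, of rho "1/r" theta] rho0 rho1 b th by simp
  moreover have "(1-rho) *\<^sub>R (1/r) + rho *\<^sub>R theta = yone" unfolding yone_def
    using b by (simp add: field_simps)
  ultimately have ly: "ln yone \<ge> (1-rho)*ln (1/r) + rho*ln theta" by simp
  have "s * ln yone \<ge> s*((1-rho)*ln (1/r) + rho*ln theta)" using ly s1 by (intro mult_left_mono) auto
  moreover have "s*((1-rho)*ln (1/r) + rho*ln theta) = s*ln(1/r) + s*rho*ln(r*theta)"
  proof -
    have lt: "ln theta = ln(1/r) + ln(r*theta)" using b(8) by simp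
    show ?thesis unfolding lt by (simp add: algebra_simps)
  qed
  moreover have "(s+1)*ln (1/r) = s*ln(1/r) + ln(1/r)" by (simp add: algebra_simps)
  ultimately show "C (1/r) yone" using srho b(8) by linarith
qed

lemma Phi_cases:
  "y < r*theta \<Longrightarrow> Phi_rho theta r rho y = r*theta"
  "r*theta \<le> y \<Longrightarrow> y < 1/r \<Longrightarrow> Phi_rho theta r rho y = phi_line theta r y"
  "1/r \<le> y \<Longrightarrow> y < yone \<Longrightarrow> Phi_rho theta r rho y =
     phi_line theta r (1/r) + (1/r - phi_line theta r (1/r)) * ((y - 1/r) / (yone - 1/r))"
  "yone \<le> y \<Longrightarrow> Phi_rho theta r rho y = 1/r"
proof -
  note b = basics
  have "1/r < yone" by (rule yone_props)
  then show "y < r*theta \<Longrightarrow> Phi_rho theta r rho y = r*theta"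
    "r*theta \<le> y \<Longrightarrow> y < 1/r \<Longrightarrow> Phi_rho theta r rho y = phi_line theta r y"
    "1/r \<le> y \<Longrightarrow> y < yone \<Longrightarrow> Phi_rho theta r rho y =
     phi_line theta r (1/r) + (1/r - phi_line theta r (1/r)) * ((y - 1/r) / (yone - 1/r))"
    "yone \<le> y \<Longrightarrow> Phi_rho theta r rho y = 1/r"
    using b unfolding Phi_rho_def yone_def by auto
qed

lemma seg3: assumes "1/r \<le> y" "y < yone"
  defines "c \<equiv> phi_line theta r (1/r)"
  defines "t \<equiv> (y - 1/r) / (yone - 1/r)"
  shows "0 \<le> t" "t \<le> 1" "r*theta \<le> c" "c \<le> 1/r" "C c (1/r)" "(1/r)/(r*theta) \<le> c"
proof -
  note b = basics
  note yp = yone_props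
  show "0 \<le> t" "t \<le> 1" using assms yp unfolding t_def by (auto simp: field_simps)
  show "r*theta \<le> c" "c \<le> 1/r" "C c (1/r)" "(1/r)/(r*theta) \<le> c"
    using seg2[of "1/r"] seg2_lower[of "1/r"] b unfolding c_def by auto
qed

lemma Phi_bounds: "r*theta \<le> Phi_rho theta r rho y" "Phi_rho theta r rho y \<le> 1/r"
proof -
  note b = basics
  have "r*theta \<le> Phi_rho theta r rho y \<and> Phi_rho theta r rho y \<le> 1/r"
  proof (cases "y < r*theta")
    case True thus ?thesis using Phi_cases b by simp
  next
    case f1: False
    show ?thesis
    proof (cases "y < 1/r")
      case True thus ?thesis using Phi_cases(2)[of y] seg2[of y] f1 b by simp
    next
      case f2: False
      show ?thesis
      proof (cases "y < yone")
        case True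
        define c where "c = phi_line theta r (1/r)"
        define t where "t = (y - 1/r) / (yone - 1/r)"
        have F: "Phi_rho theta r rho y = c + (1/r - c)*t" using Phi_cases(3)[of y] f2 True
          unfolding c_def t_def by simp
        note h = seg3[of y, folded c_def t_def]
        have n1: "0 \<le> (1/r - c)*t" using h f2 True by (auto intro: mult_nonneg_nonneg)
        have n2: "(1/r - c)*t \<le> (1/r - c)" using h f2 True by (auto intro: mult_left_le)
        have "r*theta \<le> c" "c \<le> 1/r" using h f2 True by auto
        then show ?thesis using F n1 n2 by linarith
      next
        case False thus ?thesis using Phi_cases(4)[of y] b by simp
      qed
    qed
  qed
  thus "r*theta \<le> Phi_rho theta r rho y" "Phi_rho theta r rho y \<le> 1/r" by auto
qed

lemma Phi_upper: assumes "r*theta \<le> y" "y \<le> theta"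
  shows "C (Phi_rho theta r rho y) y" "Phi_rho theta r rho y \<le> y"
proof -
  note b = basics
  note yp = yone_props
  have "C (Phi_rho theta r rho y) y \<and> Phi_rho theta r rho y \<le> y"
  proof (cases "y < 1/r")
    case True thus ?thesis using Phi_cases(2)[of y] seg2[of y] assms by simp
  next
    case f2: False
    show ?thesis
    proof (cases "y < yone")
      case True
      define c where "c = phi_line theta r (1/r)"
      define t where "t = (y - 1/r) / (yone - 1/r)"
      have F: "Phi_rho theta r rho y = c + (1/r - c)*t" using Phi_cases(3)[of y] f2 True
        unfolding c_def t_def by simp
      note h = seg3[of y, folded c_def t_def]
      have "C (c + (1/r - c)*((y - 1/r)/(yone - 1/r))) y"
        using seg[of "1/r" yone y c "1/r" s "ln (r*theta)"] h yp f2 True b s1 by simp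
      moreover have "(1/r - c)*t \<le> (1/r - c)" using h f2 True by (auto intro: mult_left_le)
      ultimately show ?thesis using F f2 t_def by simp
    next
      case False
      hence "ln yone \<le> ln y" using yp b by simp
      hence "s*ln yone \<le> s*ln y" using s1 by (intro mult_left_mono) auto
      thus ?thesis using Phi_cases(4)[of y] False yp b by simp
    qed
  qed
  thus "C (Phi_rho theta r rho y) y" "Phi_rho theta r rho y \<le> y" by auto
qed

lemma Phi_lower: assumes "1 \<le> y" "y \<le> theta"
  shows "y/(r*theta) \<le> Phi_rho theta r rho y"
proof -
  note b = basics
  note yp = yone_props
  show ?thesis
  proof (cases "y < r*theta")
    case True
    have "y/(r*theta) < 1" using True b by simp
    thus ?thesis using Phi_cases(1)[OF True] b by linarith
  next
    case f1: False
    show ?thesis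
    proof (cases "y < 1/r")
      case True thus ?thesis using Phi_cases(2)[of y] seg2_lower[of y] f1 assms by simp
    next
      case f2: False
      show ?thesis
      proof (cases "y < yone")
        case True
        define c where "c = phi_line theta r (1/r)"
        define t where "t = (y - 1/r) / (yone - 1/r)"
        define q where "q = (1/r)/(r*theta)"
        define D where "D = yone - 1/r"
        have Dp: "D > 0" using yp D_def by simp
        have F: "Phi_rho theta r rho y = c + (1/r - c)*t" using Phi_cases(3)[of y] f2 True
          unfolding c_def t_def by simp
        note h = seg3[of y, folded c_def t_def]
        have yt: "y = 1/r + t*D" using Dp unfolding t_def D_def by simp
        have "y/(r*theta) = q + t*(D/(r*theta))" unfolding yt q_def using b
          by (simp add: add_divide_distrib)
        also have "D/(r*theta) \<le> (theta - 1/r)/(r*theta)" using yp b unfolding D_def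
          by (intro divide_right_mono) auto
        also have "(theta - 1/r)/(r*theta) = 1/r - q" unfolding q_def using b th
          by (simp add: diff_divide_distrib)
        finally have "y/(r*theta) \<le> q + t*(1/r - q)" using h f2 True
          by (simp add: mult_left_mono)
        moreover have "(1-t)*q \<le> (1-t)*c" using h f2 True q_def by (intro mult_left_mono) auto
        ultimately show ?thesis using F by (simp add: algebra_simps)
      next
        case False
        have "y/(r*theta) \<le> theta/(r*theta)" using assms b by (intro divide_right_mono) auto
        also have "theta/(r*theta) = 1/r" using th by simp
        finally show ?thesis using Phi_cases(4)[of y] False by simp
      qed
    qed
  qed
qed

end


theorem theorem2:
  fixes theta r rho y :: real and p :: "real list"
  assumes "theta > 1"
    and "1/theta < r" and "r \<le> 1 / sqrt theta"
    and "0 < rho" and "rho \<le> 1"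
    and "length p \<ge> 1"
    and "\<forall>x\<in>set p. 1 \<le> x \<and> x \<le> theta"
    and "1 \<le> y" and "y \<le> theta"
  shows "A_rho theta r rho p y / Max (set p)
           \<ge> max r ((1/(r*theta)) *
                 mult_err (Max (set p)) y
                   powr (max 1 ((1/rho) * (ln theta / ln (r*theta) - 2))))"
proof -
  define s where "s = max 1 ((1/rho) * (ln theta / ln (r*theta) - 2))"
  define l where "l = ln (r*theta)"
  have s1: "s \<ge> 1" unfolding s_def by simp
  have rt: "r*theta > 1" using assms(1,2) by (simp add: field_simps)
  hence l0: "l > 0" unfolding l_def by simp
  have "s \<ge> (1/rho) * (ln theta / l - 2)" unfolding s_def l_def by simp
  hence "s*rho \<ge> ln theta / l - 2" using assms(4) by (simp add: field_simps)
  hence "s*rho*l \<ge> (ln theta / l - 2)*l" using l0 by (intro mult_right_mono) auto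
  also have "(ln theta / l - 2)*l = ln theta - 2*l" using l0 by (simp add: field_simps)
  finally have srho: "s*rho*ln (r*theta) \<ge> ln theta - 2*ln(r*theta)" unfolding l_def .
  note ctx = assms(1-5) s1 srho
  note b = basics[OF ctx]
  define F where "F = Phi_rho theta r rho y"
  have Fb: "r*theta \<le> F" "F \<le> 1/r" unfolding F_def using Phi_bounds[OF ctx] by auto
  have Fl: "y/(r*theta) \<le> F" unfolding F_def using Phi_lower[OF ctx] assms by auto
  define P where "P = Max (set p)"
  have ne: "set p \<noteq> {}" using assms(6) by auto
  have Pin: "P \<in> set p" unfolding P_def using ne by simp
  have Pge: "\<And>x. x \<in> set p \<Longrightarrow> x \<le> P" unfolding P_def by simp
  have P1: "1 \<le> P" "P \<le> theta" using Pin assms(7) by auto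
  define E where "E = mult_err P y"
  have E0: "0 < E" "E \<le> 1" "E \<le> y/P"
  proof -
    show "0 < E" using P1 assms(8) unfolding E_def mult_err_def by simp
    show "E \<le> y/P" unfolding E_def mult_err_def by simp
    show "E \<le> 1"
    proof (cases "P \<le> y")
      case True
      hence "P/y \<le> 1" using P1 by simp
      thus ?thesis unfolding E_def mult_err_def by simp
    next
      case False
      hence "y/P \<le> 1" using P1 by simp
      thus ?thesis unfolding E_def mult_err_def by simp
    qed
  qed
  have Es: "E powr s \<le> 1" using E0 s1 by (intro powr_le1) auto
  have goal: "r \<le> A_rho theta r rho p y / P \<and> (1/(r*theta)) * E powr s \<le> A_rho theta r rho p y / P"
  proof (cases "find (\<lambda>x. x \<ge> F) p")
    case None
    hence A: "A_rho theta r rho p y = 1" unfolding A_rho_def threshold_payoff_def F_def by simp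
    have lt: "P < F" using None Pin unfolding find_None_iff by auto
    have "P*r \<le> F*r" using lt b by (intro mult_right_mono) auto
    moreover have "F*r \<le> 1" using Fb b by (simp add: field_simps)
    ultimately have "P*r \<le> 1" by simp
    hence g1: "r \<le> 1/P" using P1 by (simp add: field_simps)
    have g2: "(1/(r*theta)) * E powr s \<le> 1/P"
    proof (cases "P \<le> r*theta")
      case True
      have "(1/(r*theta)) * E powr s \<le> 1/(r*theta)" using Es rt by (simp add: divide_right_mono)
      also have "\<dots> \<le> 1/P" using True P1 by (simp add: frac_le)
      finally show ?thesis .
    next
      case False
      hence yge: "r*theta \<le> y"
        using lt Phi_cases(1)[OF ctx, of y] unfolding F_def by force
      have CF: "(s+1)*ln F \<le> ln (r*theta) + s*ln y" "F \<le> y"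
        using Phi_upper[OF ctx yge assms(9)] unfolding F_def by auto
      have Py: "P < y" using lt CF by simp
      have "P/y \<le> 1" using Py P1 by simp
      moreover have "1 \<le> y/P" using Py P1 by simp
      ultimately have EP: "E = P/y" unfolding E_def mult_err_def by simp
      have "ln P < ln F" using lt P1 by simp
      hence "(s+1)*ln P \<le> (s+1)*ln F" using s1 by simp
      hence key: "s*(ln P - ln y) - ln (r*theta) \<le> - ln P" using CF by (simp add: algebra_simps)
      have "(1/(r*theta)) * E powr s = exp (s*(ln P - ln y) - ln (r*theta))"
        unfolding EP using P1 Py rt by (simp add: powr_def ln_div exp_diff)
      also have "\<dots> \<le> exp (- ln P)" using key by simp
      also have "\<dots> = 1/P" using P1 by (simp add: exp_minus inverse_eq_divide)
      finally show ?thesis .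
    qed
    show ?thesis using A g1 g2 by simp
  next
    case (Some x)
    hence xin: "x \<in> set p" and xF: "F \<le> x" unfolding find_Some_iff by auto
    hence A: "A_rho theta r rho p y = x" using Some unfolding A_rho_def threshold_payoff_def F_def by simp
    have xP: "x \<le> P" using Pge xin by simp
    have Pp: "P > 0" using P1 by simp
    have g1: "r \<le> x/P"
    proof -
      have "r = (r*theta)/theta" using assms(1) by simp
      also have "\<dots> \<le> F/P" using Fb P1 b by (intro frac_le) auto
      also have "\<dots> \<le> x/P" using xF Pp by (simp add: divide_right_mono)
      finally show ?thesis .
    qed
    have g2: "(1/(r*theta)) * E powr s \<le> x/P"
    proof -
      have "E powr s \<le> E" using E0 s1 by (intro powr_le_one_le) auto
      hence "(1/(r*theta)) * E powr s \<le> (1/(r*theta)) * (y/P)" using E0 rt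
        by (intro mult_left_mono) auto
      also have "\<dots> = (y/(r*theta))/P" by simp
      also have "\<dots> \<le> F/P" using divide_right_mono[OF Fl, of P] Pp by simp
      also have "\<dots> \<le> x/P" using xF Pp by (simp add: divide_right_mono)
      finally show ?thesis .
    qed
    show ?thesis using A g1 g2 by simp
  qed
  thus ?thesis unfolding P_def E_def s_def by simp
qed

end
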